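(* Consider the following disjunctive hierarchical secret sharing scheme. Setting. Let $n,m$ be positive integers and let the participant set $\mathcal{P}=\{1,\dots,n\}$ be partitioned into $m$ disjoint nonempty blocks $\mathcal{P}_1,\dots,\mathcal{P}_m$ of consecutive indices: with $n_\ell=|\mathcal{P}_\ell|$, $N_0=0$, $N_\ell=\sum_{w=1}^{\ell}n_w$, we have $\mathcal{P}_\ell=\{N_{\ell-1}+1,\dots,N_\ell\}$, so that $\mathcal{P}_1\cup\dots\cup\mathcal{P}_\ell=[N_\ell]:=\{1,\dots,N_\ell\}$. Let $t_1,\dots,t_m$ be integers with $1\le t_1<t_2<\dots<t_m$ and $t_\ell\le N_\ell$ for all $\ell\in[m]$. Public parameters. A prime $m_0$ and integers $m_1,\dots,m_n$ such that $\gcd(m_i,m_j)=1$ for all $0\le i<j\le n$, $m_0<m_1<\dots<m_n$, and, for some real numbers $k\ge 1$ and $\theta\in(0,1)$, $km_0<m_i<km_0+m_0^{\theta}$ for all $i\in[n]$. Participant $i$ is assigned modulus $m_i$. Also $m$ publicly known distinct functions $h_1,\dots,h_m$, where for each $i\in[n]$ and $\ell\in[m]$, $h_\ell(x,\ell)\in\mathbb{Z}_{m_i}$ for $x\in\mathbb{Z}_{m_i}$. Share generation. For a secret $s\in\mathbb{Z}_{m_0}=\{0,\dots,m_0-1\}$, the dealer chooses integers $c_i\in\mathbb{Z}_{m_i}$ for $i\in[N_{m-1}]$ and integers $\alpha_\ell$ ($\ell\in[m]$) such that $0\le y_\ell:=s+\alpha_\ell m_0<\prod_{i=1}^{t_\ell}m_i$.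 Participant $i$ receives the share $s_i=c_i$ if $i\in[N_{m-1}]$ and $s_i=y_m \bmod m_i$ if $i\in\{N_{m-1}+1,\dots,N_m\}$. For every $i\in[N_{m-1}]$, letting $\ell_1$ be the index with $i\in\mathcal{P}_{\ell_1}$, the dealer publishes $w_i^{(\ell)}=(y_\ell-h_\ell(s_i,\ell))\bmod m_i$ for every $\ell\in\{\ell_1,\dots,m\}$. Reconstruction. Given $\mathcal{A}\subseteq\mathcal{P}$ and $\ell\in[m]$ with $\mathcal{A}^{(\ell)}:=\mathcal{A}\cap[N_\ell]$ satisfying $|\mathcal{A}^{(\ell)}|\ge t_\ell$, the participants compute, for $i\in\mathcal{A}^{(\ell)}$, $s_i^{(\ell)}=h_\ell(s_i,\ell)+w_i^{(\ell)}$ if $\ell\le m-1$, or if $\ell=m$ and $i\le N_{m-1}$; and $s_i^{(m)}=s_i$ if $\ell=m$ and $i\in\{N_{m-1}+1,\dots,N_m\}$. They then compute $Y=\left(\sum_{i\in\mathcal{A}^{(\ell)}}\lambda_{i}M_{i}s_i^{(\ell)}\right)\bmod M$, the least nonnegative residue, where $M=\prod_{i\in\mathcal{A}^{(\ell)}}m_i$, $M_i=M/m_i$, $\lambda_i\equiv M_i^{-1}\pmod{m_i}$, and output $Y\bmod m_0$. Claim. For every secret $s\in\mathbb{Z}_{m_0}$, every admissible choice of the $c_i$ and $\alpha_\ell$, and every subset $\mathcal{A}$ in the access structure $\Gamma=\{\mathcal{A}\subseteq\mathcal{P}:\exists\,\ell\in[m]\text{ with }|\mathcal{A}\cap(\bigcup_{w=1}^{\ell}\mathcal{P}_w)|\ge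 t_\ell\}$, taking any $\ell$ with $|\mathcal{A}\cap[N_\ell]|\ge t_\ell$, the reconstruction procedure yields $Y=y_\ell$ and outputs $Y\bmod m_0=s$.
   Context: $\mathbb{Z}_{q}$ denotes $\{0,1,\dots,q-1\}$ and $x\bmod q$ denotes the least nonnegative residue. $[n]=\{1,\dots,n\}$. The functions $h_\ell$ are intended to be one-way functions, but no property of them is needed beyond being fixed public maps. *)

theory Defs
  imports "HOL-Number_Theory.Number_Theory"
begin

definition Nsum :: "(nat \<Rightarrow> nat) \<Rightarrow> nat \<Rightarrow> nat" where
  "Nsum nb l = (\<Sum>w=1..l. nb w)"

definition block :: "(nat \<Rightarrow> nat) \<Rightarrow> nat \<Rightarrow> nat set" where
  "block nb l = {Nsum nb (l - 1) + 1 .. Nsum nb l}"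

definition access_structure ::
  "nat \<Rightarrow> nat \<Rightarrow> (nat \<Rightarrow> nat) \<Rightarrow> (nat \<Rightarrow> nat) \<Rightarrow> nat set set" where
  "access_structure n m nb t =
     {A. A \<subseteq> {1..n} \<and> (\<exists>l\<in>{1..m}. card (A \<inter> (\<Union>w\<in>{1..l}. block nb w)) \<ge> t l)}"

definition yval :: "int \<Rightarrow> (nat \<Rightarrow> int) \<Rightarrow> nat \<Rightarrow> nat \<Rightarrow> int" where
  "yval s alpha m0 l = s + alpha l * int m0"

definition recon_share ::
  "nat \<Rightarrow> (nat \<Rightarrow> nat) \<Rightarrow> (nat \<Rightarrow> int \<Rightarrow> nat \<Rightarrow> int) \<Rightarrow> (nat \<Rightarrow> int)
   \<Rightarrow> (nat \<Rightarrow> nat \<Rightarrow> int) \<Rightarrow> nat \<Rightarrow> nat \<Rightarrow> int" where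
  "recon_share m nb h sh w l i =
     (if l \<le> m - 1 \<or> i \<le> Nsum nb (m - 1) then h l (sh i) l + w i l else sh i)"

definition recon_Y ::
  "(nat \<Rightarrow> nat) \<Rightarrow> nat set \<Rightarrow> (nat \<Rightarrow> int) \<Rightarrow> (nat \<Rightarrow> int) \<Rightarrow> int" where
  "recon_Y mm Al lam sl =
     (let M = (\<Prod>i\<in>Al. int (mm i))
      in (\<Sum>i\<in>Al. lam i * (M div int (mm i)) * sl i) mod M)"

end

theory Submission
  imports Defs
begin

lemma Nsum_Suc: "Nsum nb (Suc l) = Nsum nb l + nb (Suc l)"
  by (simp add: Nsum_def)

lemma Nsum_mono: "l \<le> l' \<Longrightarrow> Nsum nb l \<le> Nsum nb l'"
  by (induction l' rule: dec_induct) (auto simp: Nsum_Suc)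

lemma in_block: "i \<in> {1..Nsum nb l} \<Longrightarrow> \<exists>l1\<in>{1..l}. i \<in> block nb l1"
proof (induction l)
  case 0 then show ?case by (simp add: Nsum_def)
next
  case (Suc l)
  show ?case
  proof (cases "i \<le> Nsum nb l")
    case True then show ?thesis using Suc by force
  next
    case False then have "i \<in> block nb (Suc l)" using Suc.prems by (simp add: block_def)
    then show ?thesis by force
  qed
qed

lemma mm_mono: assumes "\<forall>i<n. mm i < mm (Suc i)" "a \<le> b" "b \<le> n"
  shows "(mm a::nat) \<le> mm b"
  using assms(2,3)
proof (induction b rule: dec_induct)
  case base then show ?case by simp
next
  case (step b) then show ?case using assms(1) by (metis Suc_leD Suc_le_eq le_less_trans less_imp_le)
qed

lemma prod_ge:
  assumes mono: "\<forall>i<n. mm i < mm (Suc i)" and pos: "\<forall>i\<le>n. (mm i::nat) \<ge> 1"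
  shows "finite S \<Longrightarrow> S \<subseteq> {1..n} \<Longrightarrow> card S \<ge> t \<Longrightarrow>
     (\<Prod>i=1..t. int (mm i)) \<le> (\<Prod>i\<in>S. int (mm i))"
proof (induction t arbitrary: S)
  case 0
  have "(\<Prod>i\<in>S. int (mm i)) \<ge> 1"
    using 0 pos by (intro prod_ge_1) auto
  then show ?case by simp
next
  case (Suc t)
  then have ne: "S \<noteq> {}" by auto
  define a where "a = Max S"
  have aS: "a \<in> S" using ne Suc.prems a_def by simp
  have sub: "S \<subseteq> {1..a}" using Suc.prems a_def by auto
  have "Suc t \<le> card {1..a}" using card_mono[OF _ sub] Suc.prems by simp
  then have ta: "Suc t \<le> a" by simp
  have an: "a \<le> n" using aS Suc.prems by auto
  have IH: "(\<Prod>i=1..t. int (mm i)) \<le> (\<Prod>i\<in>S - {a}. int (mm i))"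
    using Suc.prems aS by (intro Suc.IH) auto
  have m1: "mm (Suc t) \<le> mm a" using mm_mono[OF mono ta an] .
  have "(\<Prod>i=1..Suc t. int (mm i)) = (\<Prod>i=1..t. int (mm i)) * int (mm (Suc t))"
    by (simp add: prod.cl_ivl_Suc)
  also have "\<dots> \<le> (\<Prod>i\<in>S - {a}. int (mm i)) * int (mm a)"
    using IH m1 by (intro mult_mono) (auto intro: prod_nonneg)
  also have "\<dots> = (\<Prod>i\<in>S. int (mm i))"
    using Suc.prems aS by (simp add: prod.remove mult.commute)
  finally show ?case .
qed

lemma crt_sum:
  fixes mm :: "nat \<Rightarrow> nat" and lam sl :: "nat \<Rightarrow> int" and y :: int
  assumes fin: "finite S" and pos: "\<forall>i\<in>S. mm i \<ge> 1"
    and cop: "\<forall>i\<in>S. \<forall>j\<in>S. i \<noteq> j \<longrightarrow> coprime (int (mm i)) (int (mm j))"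
    and lamc: "\<forall>i\<in>S. [lam i * ((\<Prod>j\<in>S. int (mm j)) div int (mm i)) = 1] (mod int (mm i))"
    and slc: "\<forall>i\<in>S. [sl i = y] (mod int (mm i))"
    and y0: "0 \<le> y" and yM: "y < (\<Prod>j\<in>S. int (mm j))"
  shows "recon_Y mm S lam sl = y"
proof -
  define M where "M = (\<Prod>j\<in>S. int (mm j))"
  have Mpos: "M > 0" using pos unfolding M_def by (intro prod_pos) auto
  define X where "X = (\<Sum>i\<in>S. lam i * (M div int (mm i)) * sl i)"
  have RY: "recon_Y mm S lam sl = X mod M" by (simp add: recon_Y_def M_def X_def Let_def)
  have "\<forall>j\<in>S. [X = y] (mod int (mm j))"
  proof
    fix j assume jS: "j \<in> S"
    have Mdiv: "M div int (mm j) = (\<Prod>i\<in>S-{j}. int (mm i))"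
    proof -
      have "int (mm j) \<noteq> 0" using pos jS by auto
      moreover have "M = int (mm j) * (\<Prod>k\<in>S-{j}. int (mm k))"
        unfolding M_def using prod.remove[OF fin jS] by simp
      ultimately show ?thesis by simp
    qed
    have other: "int (mm j) dvd lam i * (M div int (mm i)) * sl i" if "i \<in> S - {j}" for i
    proof -
      have "M div int (mm i) = (\<Prod>k\<in>S-{i}. int (mm k))"
      proof -
        have "int (mm i) \<noteq> 0" using pos that by auto
        moreover have "M = int (mm i) * (\<Prod>k\<in>S-{i}. int (mm k))"
          unfolding M_def using prod.remove[OF fin, of i] that by simp
        ultimately show ?thesis by simp
      qed
      moreover have "int (mm j) dvd (\<Prod>k\<in>S-{i}. int (mm k))"
        using that jS fin by (intro dvd_prodI) auto
      ultimately show ?thesis by simp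
    qed
    have Xe: "X = lam j * (M div int (mm j)) * sl j + (\<Sum>i\<in>S-{j}. lam i * (M div int (mm i)) * sl i)"
      unfolding X_def using jS fin by (simp add: sum.remove)
    have c2: "[(\<Sum>i\<in>S-{j}. lam i * (M div int (mm i)) * sl i) = 0] (mod int (mm j))"
      unfolding cong_0_iff by (rule dvd_sum) (rule other)
    have c1: "[lam j * (M div int (mm j)) * sl j = 1 * y] (mod int (mm j))"
      using lamc slc jS unfolding M_def by (intro cong_mult) auto
    have "[X = 1 * y + 0] (mod int (mm j))"
      unfolding Xe by (rule cong_add[OF c1 c2])
    then show "[X = y] (mod int (mm j))" by simp
  qed
  then have "[X = y] (mod M)" unfolding M_def
    using cop by (intro cong_cong_prod_coprime) auto
  then have "X mod M = y mod M" by (simp add: cong_def)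
  also have "\<dots> = y" using y0 yM M_def by simp
  finally show ?thesis using RY by simp
qed

theorem mainTheorem1:
  fixes n m :: nat and nb t mm :: "nat \<Rightarrow> nat" and k \<theta> :: real
    and h :: "nat \<Rightarrow> int \<Rightarrow> nat \<Rightarrow> int"
    and s :: int and c alpha sh :: "nat \<Rightarrow> int" and w :: "nat \<Rightarrow> nat \<Rightarrow> int"
    and A :: "nat set" and l :: nat and lam :: "nat \<Rightarrow> int"
  assumes "n > 0" and "m > 0"
    and "\<forall>j\<in>{1..m}. nb j \<ge> 1"
    and "n = Nsum nb m"
    and "1 \<le> t 1"
    and "\<forall>j\<in>{1..<m}. t j < t (j + 1)"
    and "\<forall>j\<in>{1..m}. t j \<le> Nsum nb j"
    and "prime (mm 0)"
    and "\<forall>i j. i < j \<and> j \<le> n \<longrightarrow> coprime (mm i) (mm j)"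
    and "\<forall>i<n. mm i < mm (Suc i)"
    and "k \<ge> 1" and "0 < \<theta>" and "\<theta> < 1"
    and "\<forall>i\<in>{1..n}. k * real (mm 0) < real (mm i) \<and>
                     real (mm i) < k * real (mm 0) + real (mm 0) powr \<theta>"
    and "inj_on h {1..m}"
    and "\<forall>i\<in>{1..n}. \<forall>j\<in>{1..m}. \<forall>x. 0 \<le> x \<and> x < int (mm i) \<longrightarrow>
                     0 \<le> h j x j \<and> h j x j < int (mm i)"
    and "0 \<le> s" and "s < int (mm 0)"
    and "\<forall>i\<in>{1..Nsum nb (m - 1)}. 0 \<le> c i \<and> c i < int (mm i)"
    and "\<forall>j\<in>{1..m}. 0 \<le> yval s alpha (mm 0) j \<and>
                     yval s alpha (mm 0) j < (\<Prod>i=1..t j. int (mm i))"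
    and "\<forall>i\<in>{1..n}. sh i = (if i \<le> Nsum nb (m - 1) then c i
                              else yval s alpha (mm 0) m mod int (mm i))"
    and "\<forall>i\<in>{1..Nsum nb (m - 1)}. \<forall>l1\<in>{1..m}. i \<in> block nb l1 \<longrightarrow>
           (\<forall>j\<in>{l1..m}. w i j = (yval s alpha (mm 0) j - h j (sh i) j) mod int (mm i))"
    and "A \<in> access_structure n m nb t"
    and "l \<in> {1..m}"
    and "card (A \<inter> {1..Nsum nb l}) \<ge> t l"
    and "\<forall>i\<in>A \<inter> {1..Nsum nb l}.
           [lam i * ((\<Prod>j\<in>A \<inter> {1..Nsum nb l}. int (mm j)) div int (mm i)) = 1] (mod int (mm i))"
  shows "recon_Y mm (A \<inter> {1..Nsum nb l}) lam (recon_share m nb h sh w l) = yval s alpha (mm 0) l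
       \<and> recon_Y mm (A \<inter> {1..Nsum nb l}) lam (recon_share m nb h sh w l) mod int (mm 0) = s"
proof -
  define S where "S = A \<inter> {1..Nsum nb l}"
  define y where "y = yval s alpha (mm 0) l"
  have lm: "1 \<le> l" "l \<le> m" using assms(24) by auto
  have Nl: "Nsum nb l \<le> n" using assms(4) Nsum_mono lm by metis
  have Sn: "S \<subseteq> {1..n}" using Nl S_def by auto
  have fin: "finite S" using S_def by simp
  have mm0: "mm 0 \<ge> 2" using assms(8) prime_ge_2_nat by blast
  have pos: "\<forall>i\<le>n. mm i \<ge> 1"
    using mm_mono[OF assms(10)] mm0 by (metis le0 le_trans one_le_numeral)
  have cop: "\<forall>i\<in>S. \<forall>j\<in>S. i \<noteq> j \<longrightarrow> coprime (int (mm i)) (int (mm j))"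
  proof (intro ballI impI)
    fix i j assume "i \<in> S" "j \<in> S" "i \<noteq> j"
    then have "i \<le> n" "j \<le> n" using Sn by auto
    then have "coprime (mm i) (mm j)" using assms(9) \<open>i \<noteq> j\<close>
      by (metis coprime_commute nat_neq_iff)
    then show "coprime (int (mm i)) (int (mm j))" by simp
  qed
  have yb: "0 \<le> y" "y < (\<Prod>i=1..t l. int (mm i))" using assms(20) lm y_def by auto
  have "(\<Prod>i=1..t l. int (mm i)) \<le> (\<Prod>i\<in>S. int (mm i))"
    using prod_ge[OF assms(10) pos fin Sn] assms(25) S_def by simp
  with yb have yM: "y < (\<Prod>i\<in>S. int (mm i))" by simp
  have slc: "\<forall>i\<in>S. [recon_share m nb h sh w l i = y] (mod int (mm i))"
  proof
    fix i assume iS: "i \<in> S"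
    show "[recon_share m nb h sh w l i = y] (mod int (mm i))"
    proof (cases "l \<le> m - 1 \<or> i \<le> Nsum nb (m - 1)")
      case True
      have iN: "i \<in> {1..Nsum nb (m - 1)}"
        using True iS S_def Nsum_mono[of l "m - 1" nb] by auto
      obtain l1 where l1: "l1 \<in> {1..l}" "i \<in> block nb l1"
        using in_block[of i nb l] iS S_def by auto
      have "w i l = (y - h l (sh i) l) mod int (mm i)"
        using assms(22) iN l1 lm y_def by (metis atLeastAtMost_iff order_trans)
      then have "recon_share m nb h sh w l i = h l (sh i) l + (y - h l (sh i) l) mod int (mm i)"
        using True by (simp add: recon_share_def)
      then show ?thesis by (simp add: cong_def mod_add_right_eq)
    next
      case False
      then have "l = m" "i \<in> {1..n}" using lm iS Sn by auto
      then show ?thesis using False assms(21) y_def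
        by (simp add: recon_share_def cong_def)
    qed
  qed
  have R: "recon_Y mm S lam (recon_share m nb h sh w l) = y"
  proof -
    have p1: "\<forall>i\<in>S. mm i \<ge> 1" using pos Sn by auto
    have l1: "\<forall>i\<in>S. [lam i * ((\<Prod>j\<in>S. int (mm j)) div int (mm i)) = 1] (mod int (mm i))"
      using assms(26) S_def by simp
    show ?thesis using crt_sum[OF fin p1 cop l1 slc yb(1) yM] .
  qed
  have "y mod int (mm 0) = s"
    using assms(17,18) y_def by (simp add: yval_def)
  then show ?thesis using R S_def y_def by simp
qed

end
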